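(* Every randomized dynamic posted-price (RDPP) mechanism, with any price update rule, is ex post incentive compatible for myopic bidders and dominant-strategy incentive compatible for myopic miners.
   Context: Dynamic posted-price setting: at each time step a block with $m$ slots is produced by an active miner; $n$ bidders with private values $v_i\ge 0$ submit bids $b_i$, each participating only once. Given the current posted price $q>0$, the eligible set is $M(q)=\{i:b_i\ge q\}$. A block is a set $B\subseteq M(q)$ with $|B|\le m$; each $i\in B$ receives a slot and pays $q$. The next posted price is $T(q,B)$ for a price update rule $T$. In an RDPP mechanism, the intended allocation rule is the random maximal (RM) rule: the miner selects $B$ uniformly at random among the maximal feasible sets, i.e. subsets of $M(q)$ of size $\min\{m,|M(q)|\}$. A myopic bidder's utility is $v_i-q$ if included and $0$ otherwise (in expectation over the allocation randomness); ex post IC for myopic bidders means that, when the miner follows the intended allocation rule, bidding $b_i=v_i$ weakly dominates every other bid for every bidder, for all bids of the others. A myopic miner's utility is the total payment $q|B|$ collected in the current block; DSIC for myopic miners means that following the intended allocation rule is a (weakly) dominant, utility-maximizing strategy for the miner for all bids. *)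

theory Defs
  imports "HOL-Probability.Probability"
begin

text \<open>Bidders are elements of a finite set N (of some type 'a); bids and values are
  functions 'a => real. Prices are reals, m is the number of slots in a block.\<close>

definition eligible :: "'a set \<Rightarrow> real \<Rightarrow> ('a \<Rightarrow> real) \<Rightarrow> 'a set" where
  "eligible N q b = {i \<in> N. b i \<ge> q}"

definition feasible_blocks :: "'a set \<Rightarrow> nat \<Rightarrow> real \<Rightarrow> ('a \<Rightarrow> real) \<Rightarrow> 'a set set" where
  "feasible_blocks N m q b = {B. B \<subseteq> eligible N q b \<and> card B \<le> m}"

definition maximal_blocks :: "'a set \<Rightarrow> nat \<Rightarrow> real \<Rightarrow> ('a \<Rightarrow> real) \<Rightarrow> 'a set set" where
  "maximal_blocks N m q b =
     {B. B \<subseteq> eligible N q b \<and> card B = min m (card (eligible N q b))}"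

definition RM :: "'a set \<Rightarrow> nat \<Rightarrow> real \<Rightarrow> ('a \<Rightarrow> real) \<Rightarrow> 'a set pmf" where
  "RM N m q b = pmf_of_set (maximal_blocks N m q b)"

text \<open>An RDPP mechanism with price update rule T: the outcome at price q is the
  (random) block chosen by the RM rule together with the next posted price T q B.\<close>
definition RDPP :: "(real \<Rightarrow> 'a set \<Rightarrow> real) \<Rightarrow> 'a set \<Rightarrow> nat \<Rightarrow> real \<Rightarrow> ('a \<Rightarrow> real)
    \<Rightarrow> ('a set \<times> real) pmf" where
  "RDPP T N m q b = map_pmf (\<lambda>B. (B, T q B)) (RM N m q b)"

definition bidder_utility :: "real \<Rightarrow> real \<Rightarrow> 'a \<Rightarrow> ('a set \<times> real) pmf \<Rightarrow> real" where
  "bidder_utility q vi i D =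
     measure_pmf.expectation D (\<lambda>(B, q'). if i \<in> B then vi - q else 0)"

definition miner_utility :: "real \<Rightarrow> ('a set \<times> real) pmf \<Rightarrow> real" where
  "miner_utility q D = measure_pmf.expectation D (\<lambda>(B, q'). q * real (card B))"

definition ex_post_IC_myopic_bidders ::
  "(real \<Rightarrow> 'a set \<Rightarrow> real) \<Rightarrow> 'a set \<Rightarrow> nat \<Rightarrow> real \<Rightarrow> bool" where
  "ex_post_IC_myopic_bidders T N m q \<longleftrightarrow>
     (\<forall>v b i bi. i \<in> N \<longrightarrow> (\<forall>j\<in>N. v j \<ge> 0) \<longrightarrow>
        bidder_utility q (v i) i (RDPP T N m q (b(i := bi)))
          \<le> bidder_utility q (v i) i (RDPP T N m q (b(i := v i))))"

text \<open>The deviating miner's block still determines the next price via T.\<close>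
definition DSIC_myopic_miner ::
  "(real \<Rightarrow> 'a set \<Rightarrow> real) \<Rightarrow> 'a set \<Rightarrow> nat \<Rightarrow> real \<Rightarrow> bool" where
  "DSIC_myopic_miner T N m q \<longleftrightarrow>
     (\<forall>b (S :: 'a set pmf). set_pmf S \<subseteq> feasible_blocks N m q b \<longrightarrow>
        miner_utility q (map_pmf (\<lambda>B. (B, T q B)) S) \<le> miner_utility q (RDPP T N m q b))"

end

theory Submission
  imports Defs
begin

lemma finite_elig: "finite N \<Longrightarrow> finite (eligible N q b)"
  unfolding eligible_def by auto

lemma maximal_fin: "finite N \<Longrightarrow> finite (maximal_blocks N m q b)"
  unfolding maximal_blocks_def
  by (rule finite_subset[of _ "Pow (eligible N q b)"]) (auto simp: finite_elig)

lemma feasible_fin: "finite N \<Longrightarrow> finite (feasible_blocks N m q b)"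
  unfolding feasible_blocks_def
  by (rule finite_subset[of _ "Pow (eligible N q b)"]) (auto simp: finite_elig)

lemma maximal_ne: "finite N \<Longrightarrow> maximal_blocks N m q b \<noteq> {}"
proof -
  assume "finite N"
  have "min m (card (eligible N q b)) \<le> card (eligible N q b)" by simp
  then obtain B where "B \<subseteq> eligible N q b" "card B = min m (card (eligible N q b))"
    by (meson obtain_subset_with_card_n)
  then show ?thesis unfolding maximal_blocks_def by auto
qed

lemma set_RM: assumes "finite N" shows "set_pmf (RM N m q b) = maximal_blocks N m q b"
  unfolding RM_def by (rule set_pmf_of_set[OF maximal_ne[OF assms] maximal_fin[OF assms]])

lemma RDPP_elig: "eligible N q b = eligible N q b' \<Longrightarrow> RDPP T N m q b = RDPP T N m q b'"
  unfolding RDPP_def RM_def maximal_blocks_def by simp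

lemma bidder_util: "finite N \<Longrightarrow> bidder_utility q c i (RDPP T N m q b)
   = measure_pmf.expectation (RM N m q b) (\<lambda>B. if i \<in> B then c - q else 0)"
  unfolding bidder_utility_def RDPP_def by simp

lemma integ_RM: "finite N \<Longrightarrow> integrable (measure_pmf (RM N m q b)) (f :: _ \<Rightarrow> real)"
  by (rule integrable_measure_pmf_finite) (simp add: set_RM maximal_fin)

lemma util_zero: assumes "finite N" "i \<notin> eligible N q b"
  shows "bidder_utility q c i (RDPP T N m q b) = 0"
  unfolding bidder_util[OF assms(1)]
  apply (rule integral_eq_zero_AE)
  using assms by (auto simp: AE_measure_pmf_iff set_RM maximal_blocks_def)

lemma util_nonneg: assumes "finite N" "c \<ge> q"
  shows "bidder_utility q c i (RDPP T N m q b) \<ge> 0"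
  unfolding bidder_util[OF assms(1)]
  apply (rule integral_nonneg_AE)
  using assms by (auto simp: AE_measure_pmf_iff)

lemma util_nonpos: assumes "finite N" "c < q"
  shows "bidder_utility q c i (RDPP T N m q b) \<le> 0"
  unfolding bidder_util[OF assms(1)]
  apply (rule measure_pmf.integral_le_const)
   apply (rule integ_RM[OF assms(1)])
  using assms by (auto simp: AE_measure_pmf_iff)

lemma truthful_nonneg: assumes "finite N"
  shows "bidder_utility q (v i) i (RDPP T N m q (b(i := v i))) \<ge> 0"
proof (cases "v i \<ge> q")
  case True then show ?thesis using util_nonneg[OF assms True] by simp
next
  case False
  then have ni: "i \<notin> eligible N q (b(i := v i))" unfolding eligible_def by auto
  then show ?thesis using util_zero[OF assms ni] by simp
qed

lemma bidders: assumes "finite N" shows "ex_post_IC_myopic_bidders T N m q"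
  unfolding ex_post_IC_myopic_bidders_def
proof (intro allI impI)
  fix v b i bi assume iN: "i \<in> N"
  note tn = truthful_nonneg[OF assms, of q v i T m b]
  show "bidder_utility q (v i) i (RDPP T N m q (b(i := bi)))
          \<le> bidder_utility q (v i) i (RDPP T N m q (b(i := v i)))"
  proof (cases "bi \<ge> q")
    case False
    then have ni: "i \<notin> eligible N q (b(i := bi))" unfolding eligible_def by auto
    then show ?thesis using util_zero[OF assms ni] tn by simp
  next
    case bi: True
    show ?thesis
    proof (cases "v i \<ge> q")
      case True
      have eq: "eligible N q (b(i := bi)) = eligible N q (b(i := v i))"
        unfolding eligible_def using True bi by auto
      then show ?thesis using RDPP_elig[OF eq] by simp
    next
      case False
      then show ?thesis using util_nonpos[OF assms, of "v i" q i T m "b(i := bi)"] tn by simp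
    qed
  qed
qed

lemma miners: assumes "finite N" and qpos: "q > 0" shows "DSIC_myopic_miner T N m q"
  unfolding DSIC_myopic_miner_def
proof (intro allI impI)
  fix b and S :: "'a set pmf"
  assume S: "set_pmf S \<subseteq> feasible_blocks N m q b"
  define k where "k = min m (card (eligible N q b))"
  have "miner_utility q (RDPP T N m q b) = measure_pmf.expectation (RM N m q b) (\<lambda>B. q * real (card B))"
    unfolding miner_utility_def RDPP_def by simp
  also have "\<dots> = measure_pmf.expectation (RM N m q b) (\<lambda>B. q * real k)"
    by (rule integral_cong_AE)
       (auto simp: AE_measure_pmf_iff set_RM assms maximal_blocks_def k_def)
  also have "\<dots> = q * real k" by simp
  finally have R: "miner_utility q (RDPP T N m q b) = q * real k" .
  have "miner_utility q (map_pmf (\<lambda>B. (B, T q B)) S) = measure_pmf.expectation S (\<lambda>B. q * real (card B))"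
    unfolding miner_utility_def by simp
  also have "\<dots> \<le> q * real k"
  proof (rule measure_pmf.integral_le_const)
    show "integrable (measure_pmf S) (\<lambda>B. q * real (card B))"
      by (rule integrable_measure_pmf_finite)
         (rule finite_subset[OF S feasible_fin[OF assms(1)]])
    show "AE x in measure_pmf S. q * real (card x) \<le> q * real k"
      unfolding AE_measure_pmf_iff
    proof
      fix B assume "B \<in> set_pmf S"
      then have B: "B \<subseteq> eligible N q b" "card B \<le> m" using S unfolding feasible_blocks_def by auto
      have "card B \<le> card (eligible N q b)" using B(1) card_mono finite_elig[OF assms(1)] by blast
      then have "card B \<le> k" using B(2) unfolding k_def by simp
      then show "q * real (card B) \<le> q * real k" 
        using qpos by (simp add: mult_left_mono)
    qed
  qed
  finally show "miner_utility q (map_pmf (\<lambda>B. (B, T q B)) S) \<le> miner_utility q (RDPP T N m q b)"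
    using R by simp
qed

theorem mainTheorem2:
  fixes T :: "real \<Rightarrow> 'a set \<Rightarrow> real" and N :: "'a set" and m :: nat and q :: real
  assumes "finite N" and "q > 0"
  shows "ex_post_IC_myopic_bidders T N m q \<and> DSIC_myopic_miner T N m q"
  using bidders[OF assms(1)] miners[OF assms] by blast

end
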